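(* Let $n\in\mathbb{N}$ and let $Z$ be a finite right $\mathrm{End}(\mathbb{F}^n)$-set. Then there exists $t\in\mathbb{N}$ such that the composite $X_Z\to G_Z\twoheadrightarrow q_tG_Z$ is a monomorphism. In particular, $X_Z$ is a finite presheaf of degree at most $t$.
   Context: $p$ prime, $\mathbb{F}=\mathbb{F}_p$, $\mathscr{V}_f$ finite-dimensional $\mathbb{F}$-vector spaces; presheaves are contravariant functors on $\mathscr{V}_f$. $\mathscr{F}$ is the abelian category of functors $\mathscr{V}_f^{\mathrm{op}}\to$ ($\mathbb{F}$-vector spaces); a functor is finite if it has a finite composition series. Polynomial degree in $\mathscr{F}$ is in the sense of Eilenberg–MacLane (vanishing of the $(t+1)$-st cross-effect); $q_t:\mathscr{F}\to\mathscr{F}$ is left adjoint to the inclusion of functors of polynomial degree $\le t$, and $F\twoheadrightarrow q_tF$ is the universal map to a polynomial functor of degree $\le t$. $X_Z$ is the presheaf $V\mapsto Z\times_{\mathrm{End}(\mathbb{F}^n)}\mathrm{Hom}(V,\mathbb{F}^n)$, $G_Z\in\mathscr{F}$ is $V\mapsto\mathbb{F}[Z]\otimes_{\mathbb{F}[\mathrm{End}(\mathbb{F}^n)]}\mathbb{F}[\mathrm{Hom}(V,\mathbb{F}^n)]$, and $X_Z\to G_Z$ is induced by $Z\hookrightarrow\mathbb{F}[Z]$. A presheaf $X$ taking finite values is finite of degree at most $t$ if the composite $X\hookrightarrow\mathbb{F}[X]\twoheadrightarrow q_t\mathbb{F}[X]$ is a monomorphism ($\mathbb{F}[X]$ the sectionwise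 linearization); equivalently $X$ embeds in a finite functor of $\mathscr{F}$ of polynomial degree $\le t$. *)

theory Defs
  imports "HOL-Computational_Algebra.Primes" "HOL-Library.Function_Algebras" "HOL-Library.Cardinality"
begin

text \<open>The field is a finite field 'k of prime cardinality p (i.e. F_p).  Finite-dimensional
  F-vector spaces are represented by the skeleton F^m, m \<in> nat.  A linear map F^m \<rightarrow> F^n is
  an n \<times> m matrix, encoded as a function nat \<Rightarrow> nat \<Rightarrow> 'k vanishing outside the range.\<close>

type_synonym 'k mat = "nat \<Rightarrow> nat \<Rightarrow> 'k"

definition hom :: "nat \<Rightarrow> nat \<Rightarrow> ('k::zero) mat set" where
  "hom m n = {A. \<forall>i j. A i j \<noteq> 0 \<longrightarrow> i < n \<and> j < m}"

text \<open>Composition: for A : F^k \<rightarrow> F^n and B : F^m \<rightarrow> F^k, mmult k A B is A \<circ> B.\<close>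
definition mmult :: "nat \<Rightarrow> ('k::comm_semiring_1) mat \<Rightarrow> 'k mat \<Rightarrow> 'k mat" where
  "mmult k A B = (\<lambda>i j. \<Sum>l<k. A i l * B l j)"

definition idm :: "nat \<Rightarrow> ('k::{zero,one}) mat" where
  "idm n = (\<lambda>i j. if i = j \<and> i < n then 1 else 0)"

definition right_End_set :: "nat \<Rightarrow> 'z set \<Rightarrow> ('z \<Rightarrow> ('k::field) mat \<Rightarrow> 'z) \<Rightarrow> bool" where
  "right_End_set n Z act \<longleftrightarrow>
     (\<forall>z\<in>Z. \<forall>a\<in>hom n n. act z a \<in> Z) \<and>
     (\<forall>z\<in>Z. act z (idm n) = z) \<and>
     (\<forall>z\<in>Z. \<forall>a\<in>hom n n. \<forall>b\<in>hom n n. act (act z a) b = act z (mmult n a b))"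

text \<open>X_Z(F^m) = Z \<times>_{End(F^n)} Hom(F^m,F^n) = (Z \<times> hom m n) modulo the equivalence
  relation generated by (z\<cdot>a, f) ~ (z, a \<circ> f).\<close>
definition XZ_gen :: "nat \<Rightarrow> 'z set \<Rightarrow> ('z \<Rightarrow> ('k::field) mat \<Rightarrow> 'z) \<Rightarrow> nat
    \<Rightarrow> (('z \<times> 'k mat) \<times> ('z \<times> 'k mat)) set" where
  "XZ_gen n Z act m =
     {((act z a, f), (z, mmult n a f)) | z a f. z \<in> Z \<and> a \<in> hom n n \<and> f \<in> hom m n}"

definition XZ_equiv :: "nat \<Rightarrow> 'z set \<Rightarrow> ('z \<Rightarrow> ('k::field) mat \<Rightarrow> 'z) \<Rightarrow> nat
    \<Rightarrow> (('z \<times> 'k mat) \<times> ('z \<times> 'k mat)) set" where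
  "XZ_equiv n Z act m = (XZ_gen n Z act m \<union> (XZ_gen n Z act m)\<inverse>)\<^sup>*"

text \<open>The free vector space F[Z \<times> Hom(F^m,F^n)] (finitely supported functions; finiteness of
  support is automatic since Z and hom m n are finite).\<close>
definition FV :: "nat \<Rightarrow> 'z set \<Rightarrow> nat \<Rightarrow> ('z \<times> ('k::field) mat \<Rightarrow> 'k) set" where
  "FV n Z m = {v. \<forall>x. v x \<noteq> 0 \<longrightarrow> x \<in> Z \<times> hom m n}"

definition delta :: "'a \<Rightarrow> 'a \<Rightarrow> ('k::{zero,one})" where
  "delta x = (\<lambda>y. if y = x then 1 else 0)"

text \<open>Contravariant functoriality: for g : F^m' \<rightarrow> F^m, the basis element (z,f) with
  f : F^m \<rightarrow> F^n is sent to (z, f \<circ> g); pull n m g is its linear extension.\<close>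
definition pull :: "nat \<Rightarrow> nat \<Rightarrow> ('k::field) mat \<Rightarrow> ('z \<times> 'k mat \<Rightarrow> 'k) \<Rightarrow> ('z \<times> 'k mat \<Rightarrow> 'k)" where
  "pull n m g v = (\<lambda>(z, h). \<Sum>f\<in>{f \<in> hom m n. mmult m f g = h}. v (z, f))"

text \<open>G_Z(F^m) = F[Z] \<otimes>_{F[End(F^n)]} F[Hom(F^m,F^n)] is the quotient of F[Z \<times> Hom(F^m,F^n)]
  by the span of the balancing relations z\<cdot>a \<otimes> f - z \<otimes> a\<circ>f.\<close>
definition GZ_rels :: "nat \<Rightarrow> 'z set \<Rightarrow> ('z \<Rightarrow> ('k::field) mat \<Rightarrow> 'z) \<Rightarrow> nat
    \<Rightarrow> ('z \<times> 'k mat \<Rightarrow> 'k) set" where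
  "GZ_rels n Z act m =
     {delta (act z a, f) - delta (z, mmult n a f) | z a f. z \<in> Z \<and> a \<in> hom n n \<and> f \<in> hom m n}"

text \<open>Subfunctors of G_Z, represented by their preimages K in the free functor: families of
  linear subspaces containing the balancing relations and stable under pullbacks.\<close>
definition GZ_subfunctor :: "nat \<Rightarrow> 'z set \<Rightarrow> ('z \<Rightarrow> ('k::field) mat \<Rightarrow> 'z)
    \<Rightarrow> (nat \<Rightarrow> ('z \<times> 'k mat \<Rightarrow> 'k) set) \<Rightarrow> bool" where
  "GZ_subfunctor n Z act K \<longleftrightarrow>
     (\<forall>m. K m \<subseteq> FV n Z m \<and> 0 \<in> K m \<and> (\<forall>v\<in>K m. \<forall>w\<in>K m. v + w \<in> K m)
          \<and> (\<forall>c. \<forall>v\<in>K m. (\<lambda>x. c * v x) \<in> K m)) \<and>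
     (\<forall>m m'. \<forall>g\<in>hom m' m. \<forall>v\<in>K m. pull n m g v \<in> K m') \<and>
     (\<forall>m. GZ_rels n Z act m \<subseteq> K m)"

text \<open>Block idempotent e_I of V = V_0 \<oplus> ... \<oplus> V_t = F^M, where coordinate j < M lies in block b j:
  the projection onto \<Oplus>_{i \<in> I} V_i.\<close>
definition block_idem :: "nat \<Rightarrow> (nat \<Rightarrow> nat) \<Rightarrow> nat set \<Rightarrow> ('k::{zero,one}) mat" where
  "block_idem M b I = (\<lambda>i j. if i = j \<and> i < M \<and> b i \<in> I then 1 else 0)"

text \<open>The quotient G_Z/K has polynomial degree \<le> t (Eilenberg-MacLane): its (t+1)-st cross-effect
  vanishes, i.e. the cross-effect idempotent \<Sum>_{I \<subseteq> {0..t}} (-1)^{t+1-|I|} F(e_I) on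
  F(V_0 \<oplus> ... \<oplus> V_t) is zero, for all V_0,...,V_t.\<close>
definition quotient_deg_le :: "nat \<Rightarrow> 'z set \<Rightarrow> nat
    \<Rightarrow> (nat \<Rightarrow> ('z \<times> ('k::field) mat \<Rightarrow> 'k) set) \<Rightarrow> bool" where
  "quotient_deg_le n Z t K \<longleftrightarrow>
     (\<forall>M b. (\<forall>j<M. b j \<le> t) \<longrightarrow>
        (\<forall>v\<in>FV n Z M.
           (\<Sum>I\<in>Pow {0..t}. (\<lambda>x. (-1) ^ (t + 1 - card I) * pull n M (block_idem M b I) v x))
             \<in> K M))"

text \<open>Kernel of F[Z \<times> Hom(F^m,F^n)] \<rightarrow> G_Z(F^m) \<rightarrow> q_t G_Z(F^m): the smallest subfunctor K
  of G_Z with G_Z/K of degree \<le> t (so q_t G_Z = G_Z / K).\<close>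
definition qt_ker :: "nat \<Rightarrow> 'z set \<Rightarrow> ('z \<Rightarrow> ('k::field) mat \<Rightarrow> 'z) \<Rightarrow> nat \<Rightarrow> nat
    \<Rightarrow> ('z \<times> 'k mat \<Rightarrow> 'k) set" where
  "qt_ker n Z act t m =
     \<Inter>{K m | K. GZ_subfunctor n Z act K \<and> quotient_deg_le n Z t K}"

end

theory Submission
  imports Defs
begin

definition GG :: "(nat \<Rightarrow> 'a::comm_ring_1) \<Rightarrow> nat set \<Rightarrow> ('a \<Rightarrow> 'b::comm_ring_1) \<Rightarrow> 'a \<Rightarrow> 'b" where
  "GG w S \<Psi> y = (\<Sum>I\<in>Pow S. (-1) ^ (card S - card I) * \<Psi> (y + (\<Sum>i\<in>I. w i)))"

lemma GG_empty: "GG w {} \<Psi> y = \<Psi> y"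
  by (simp add: GG_def)

lemma GG_insert:
  assumes "finite S" "x \<notin> S"
  shows "GG w (insert x S) \<Psi> y = GG w S \<Psi> (y + w x) - GG w S \<Psi> y"
proof -
  have fin: "finite (Pow S)" using assms by simp
  have disj: "Pow S \<inter> insert x ` Pow S = {}" using assms by auto
  have inj: "inj_on (insert x) (Pow S)" using assms
    by (auto simp: inj_on_def)
  have cS: "card (insert x S) = Suc (card S)" using assms by simp
  have "GG w (insert x S) \<Psi> y = (\<Sum>I\<in>Pow S. (-1) ^ (card (insert x S) - card I) * \<Psi> (y + (\<Sum>i\<in>I. w i)))
     + (\<Sum>I\<in>insert x ` Pow S. (-1) ^ (card (insert x S) - card I) * \<Psi> (y + (\<Sum>i\<in>I. w i)))"
    unfolding GG_def Pow_insert using fin disj by (simp add: sum.union_disjoint)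
  also have "(\<Sum>I\<in>Pow S. (-1) ^ (card (insert x S) - card I) * \<Psi> (y + (\<Sum>i\<in>I. w i)))
     = - GG w S \<Psi> y"
    unfolding GG_def sum_negf[symmetric]
  proof (rule sum.cong[OF refl])
    fix I assume "I \<in> Pow S"
    then have "card I \<le> card S" using assms by (simp add: card_mono)
    then have "card (insert x S) - card I = Suc (card S - card I)" using cS by simp
    then show "(-1) ^ (card (insert x S) - card I) * \<Psi> (y + (\<Sum>i\<in>I. w i)) =
      - ((-1) ^ (card S - card I) * \<Psi> (y + (\<Sum>i\<in>I. w i)))" by simp
  qed
  also have "(\<Sum>I\<in>insert x ` Pow S. (-1) ^ (card (insert x S) - card I) * \<Psi> (y + (\<Sum>i\<in>I. w i)))
     = GG w S \<Psi> (y + w x)"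
    unfolding GG_def sum.reindex[OF inj] o_def
  proof (rule sum.cong[OF refl])
    fix I assume I: "I \<in> Pow S"
    then have fI: "finite I" and xI: "x \<notin> I" using assms finite_subset by auto
    then have "card (insert x I) = Suc (card I)" by simp
    moreover have "(\<Sum>i\<in>insert x I. w i) = w x + (\<Sum>i\<in>I. w i)" using fI xI by simp
    ultimately show "(-1) ^ (card (insert x S) - card (insert x I)) * \<Psi> (y + (\<Sum>i\<in>insert x I. w i)) =
      (-1) ^ (card S - card I) * \<Psi> (y + w x + (\<Sum>i\<in>I. w i))" using cS by (simp add: add.assoc)
  qed
  finally show ?thesis by simp
qed

lemma GG_union:
  assumes "finite S" "finite P" "S \<inter> P = {}"
  shows "GG w (S \<union> P) \<Psi> y = GG w S (GG w P \<Psi>) y"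
  using assms
proof (induction S arbitrary: y rule: finite_induct)
  case empty
  then show ?case by (simp add: GG_empty)
next
  case (insert x S)
  have "GG w (insert x S \<union> P) \<Psi> y = GG w (insert x (S \<union> P)) \<Psi> y" by simp
  also have "\<dots> = GG w (S \<union> P) \<Psi> (y + w x) - GG w (S \<union> P) \<Psi> y"
    using insert by (intro GG_insert) auto
  also have "\<dots> = GG w S (GG w P \<Psi>) (y + w x) - GG w S (GG w P \<Psi>) y"
    using insert by simp
  also have "\<dots> = GG w (insert x S) (GG w P \<Psi>) y"
    using insert by (simp add: GG_insert)
  finally show ?case .
qed

lemma GG_zero: "GG w S (\<lambda>_. 0) y = 0"
  by (simp add: GG_def)

lemma sum_Pow_card:
  fixes h :: "nat \<Rightarrow> 'b::comm_ring_1"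
  assumes fP: "finite P"
  shows "(\<Sum>I\<in>Pow P. h (card I)) = (\<Sum>k\<in>{0..card P}. of_nat (card P choose k) * h k)"
proof -
  have "(\<Sum>I\<in>Pow P. h (card I)) = (\<Sum>k\<in>{0..card P}. (\<Sum>I\<in>{I \<in> Pow P. card I = k}. h (card I)))"
    by (rule sum.group[symmetric]) (use fP in \<open>auto simp: card_mono\<close>)
  also have "\<dots> = (\<Sum>k\<in>{0..card P}. of_nat (card P choose k) * h k)"
  proof (rule sum.cong[OF refl])
    fix k
    have "{I \<in> Pow P. card I = k} = {I. I \<subseteq> P \<and> card I = k}" by auto
    then have "card {I \<in> Pow P. card I = k} = card P choose k"
      using n_subsets[OF fP, of k] by simp
    then show "(\<Sum>I\<in>{I \<in> Pow P. card I = k}. h (card I)) = of_nat (card P choose k) * h k"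
      by simp
  qed
  finally show ?thesis .
qed
lemma binom_vanish:
  fixes \<Psi> :: "'a::comm_ring_1 \<Rightarrow> 'b::comm_ring_1"
  assumes p: "prime p" and pa: "of_nat p = (0::'a)" and pb: "of_nat p = (0::'b)"
  shows "(\<Sum>k\<in>{0..p}. of_nat (p choose k) * ((-1) ^ (p - k) * \<Psi> (y + of_nat k * c))) = 0"
proof -
  have p0: "p \<noteq> 0" using p by auto
  have "(\<Sum>k\<in>{0..p}. of_nat (p choose k) * ((-1) ^ (p - k) * \<Psi> (y + of_nat k * c)))
     = (\<Sum>k\<in>{0,p}. of_nat (p choose k) * ((-1) ^ (p - k) * \<Psi> (y + of_nat k * c)))"
  proof (rule sum.mono_neutral_right)
    show "\<forall>k\<in>{0..p} - {0, p}. of_nat (p choose k) * ((-1) ^ (p - k) * \<Psi> (y + of_nat k * c)) = 0"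
    proof
      fix k assume k: "k \<in> {0..p} - {0, p}"
      have "p dvd (p choose k)" using k p p0 by (intro dvd_choose_prime) auto
      then obtain q where "p choose k = p * q" by blast
      then have "(of_nat (p choose k) :: 'b) = 0" using pb by simp
      then show "of_nat (p choose k) * ((-1) ^ (p - k) * \<Psi> (y + of_nat k * c)) = 0" by simp
    qed
  qed auto
  also have "\<dots> = (-1) ^ p * \<Psi> y + \<Psi> y"
    using p0 pa by simp
  also have "\<dots> = ((-1) ^ p + 1) * \<Psi> y" by (simp add: distrib_right)
  also have "(-1) ^ p + 1 = (0::'b)"
  proof (cases "p = 2")
    case True
    then show ?thesis using pb by simp
  next
    case False
    have "p > 2" using p False prime_ge_2_nat[OF p] by linarith
    then have "odd p" using p prime_odd_nat by blast
    then show ?thesis by simp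
  qed
  finally show ?thesis by simp
qed
lemma GG_const:
  fixes w :: "nat \<Rightarrow> 'a::comm_ring_1" and \<Psi> :: "'a \<Rightarrow> 'b::comm_ring_1"
  assumes p: "prime p" and pa: "of_nat p = (0::'a)" and pb: "of_nat p = (0::'b)"
    and fP: "finite P" and cP: "card P = p" and wc: "\<forall>i\<in>P. w i = c"
  shows "GG w P \<Psi> y = 0"
proof -
  define h where "h k = (-1) ^ (p - k) * \<Psi> (y + of_nat k * c)" for k
  have "GG w P \<Psi> y = (\<Sum>I\<in>Pow P. h (card I))"
    unfolding GG_def h_def cP
  proof (rule sum.cong[OF refl])
    fix I assume "I \<in> Pow P"
    then have "(\<Sum>i\<in>I. w i) = (\<Sum>i\<in>I. c)" using wc by (intro sum.cong) auto
    then show "(-1) ^ (p - card I) * \<Psi> (y + (\<Sum>i\<in>I. w i)) = (-1) ^ (p - card I) * \<Psi> (y + of_nat (card I) * c)"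
      by simp
  qed
  also have "\<dots> = (\<Sum>k\<in>{0..p}. of_nat (p choose k) * h k)"
    using sum_Pow_card[OF fP, of h] cP by simp
  also have "\<dots> = 0" unfolding h_def by (rule binom_vanish[OF p pa pb])
  finally show ?thesis .
qed

lemma pigeon:
  assumes fS: "finite S" and fW: "finite W" and wW: "\<forall>i\<in>S. w i \<in> W"
    and big: "(p - 1) * card W < card S"
  shows "\<exists>c P. P \<subseteq> S \<and> card P = p \<and> finite P \<and> (\<forall>i\<in>P. w i = c)"
proof (rule ccontr)
  assume nex: "\<not> ?thesis"
  have le: "card {i \<in> S. w i = c} \<le> p - 1" for c
  proof (rule ccontr)
    assume "\<not> card {i \<in> S. w i = c} \<le> p - 1"
    then have "p \<le> card {i \<in> S. w i = c}" by simp
    then obtain P where P: "P \<subseteq> {i \<in> S. w i = c}" "card P = p" "finite P"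
      by (rule obtain_subset_with_card_n)
    have ex: "\<exists>c P. P \<subseteq> S \<and> card P = p \<and> finite P \<and> (\<forall>i\<in>P. w i = c)"
      by (rule exI[of _ c], rule exI[of _ P]) (use P in auto)
    from nex ex show False by (rule notE)
  qed
  have "card S = (\<Sum>i\<in>S. 1::nat)" by simp
  also have "\<dots> = (\<Sum>c\<in>W. \<Sum>i\<in>{i \<in> S. w i = c}. 1)"
    using fS fW wW by (intro sum.group[symmetric]) auto
  also have "\<dots> = (\<Sum>c\<in>W. card {i \<in> S. w i = c})" by simp
  also have "\<dots> \<le> (\<Sum>c\<in>W. p - 1)" by (intro sum_mono le)
  also have "\<dots> = (p - 1) * card W" by simp
  finally show False using big by simp
qed

lemma cross_vanish:
  fixes w :: "nat \<Rightarrow> 'a::comm_ring_1" and \<Psi> :: "'a \<Rightarrow> 'b::comm_ring_1"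
  assumes p: "prime p" and pa: "of_nat p = (0::'a)" and pb: "of_nat p = (0::'b)"
    and fS: "finite S" and fW: "finite W" and wW: "\<forall>i\<in>S. w i \<in> W"
    and big: "(p - 1) * card W < card S"
  shows "(\<Sum>I\<in>Pow S. (-1) ^ (card S - card I) * \<Psi> (\<Sum>i\<in>I. w i)) = 0"
proof -
  from pigeon[OF fS fW wW big] obtain c P where P: "P \<subseteq> S" "card P = p" "finite P" "\<forall>i\<in>P. w i = c"
    by (elim exE conjE)
  have G0: "GG w P \<Psi> = (\<lambda>_. 0)"
    using GG_const[OF p pa pb P(3) P(2) P(4)] by (intro ext)
  have "S = (S - P) \<union> P" using P by auto
  then have "GG w S \<Psi> 0 = GG w ((S - P) \<union> P) \<Psi> 0" by simp
  also have "\<dots> = GG w (S - P) (GG w P \<Psi>) 0"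
    using fS P by (intro GG_union) auto
  also have "\<dots> = 0" unfolding G0 GG_zero ..
  finally show ?thesis unfolding GG_def by simp
qed

lemma mmult_hom: "A \<in> hom k n \<Longrightarrow> B \<in> hom m k \<Longrightarrow> mmult k A B \<in> hom m n"
  unfolding hom_def mmult_def
proof (clarify)
  fix i j assume A: "\<forall>i j. A i j \<noteq> 0 \<longrightarrow> i < n \<and> j < k" and B: "\<forall>i j. B i j \<noteq> 0 \<longrightarrow> i < k \<and> j < m"
    and ne: "(\<Sum>l<k. A i l * B l j) \<noteq> 0"
  then obtain l where "A i l * B l j \<noteq> 0" by (meson sum.not_neutral_contains_not_neutral)
  then show "i < n \<and> j < m" using A B by (metis mult_zero_left mult_zero_right)
qed

lemma mmult_assoc: "mmult k (mmult j A B) C = mmult j A (mmult k B C)"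
  unfolding mmult_def
  by (auto simp: sum_distrib_left sum_distrib_right mult.assoc intro!: ext sum.swap)

lemma finite_supp_fun:
  assumes "finite R"
  shows "finite {a :: nat \<Rightarrow> 'b::zero. \<forall>i. (a i \<noteq> 0 \<longrightarrow> i < n) \<and> a i \<in> R}"
proof -
  have "{a :: nat \<Rightarrow> 'b. \<forall>i. (a i \<noteq> 0 \<longrightarrow> i < n) \<and> a i \<in> R}
    \<subseteq> (\<lambda>xs i. if i < n then xs ! i else 0) ` {xs. set xs \<subseteq> R \<and> length xs = n}"
  proof
    fix a assume a: "a \<in> {a :: nat \<Rightarrow> 'b. \<forall>i. (a i \<noteq> 0 \<longrightarrow> i < n) \<and> a i \<in> R}"
    show "a \<in> (\<lambda>xs i. if i < n then xs ! i else 0) ` {xs. set xs \<subseteq> R \<and> length xs = n}"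
    proof
      show "map a [0..<n] \<in> {xs. set xs \<subseteq> R \<and> length xs = n}" using a by auto
      show "a = (\<lambda>i. if i < n then map a [0..<n] ! i else 0)" using a by (auto intro!: ext)
    qed
  qed
  moreover have "finite {xs. set xs \<subseteq> R \<and> length xs = n}" using assms by (rule finite_lists_length_eq)
  ultimately show ?thesis by (meson finite_imageI finite_subset)
qed

lemma finite_hom: "finite (hom m n :: ('k::{zero,finite}) mat set)"
proof -
  define R where "R = {r :: nat \<Rightarrow> 'k. \<forall>j. (r j \<noteq> 0 \<longrightarrow> j < m) \<and> r j \<in> UNIV}"
  have fR: "finite R" unfolding R_def by (rule finite_supp_fun) simp
  have "hom m n \<subseteq> {a :: 'k mat. \<forall>i. (a i \<noteq> 0 \<longrightarrow> i < n) \<and> a i \<in> R}"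
    unfolding hom_def R_def by (auto simp: fun_eq_iff)
  then show ?thesis using finite_supp_fun[OF fR] finite_subset by blast
qed

definition Cols :: "nat \<Rightarrow> ((nat \<Rightarrow> 'k::zero) \<times> (nat \<Rightarrow> 'k)) set" where
  "Cols n = {(a, b). \<forall>i. (a i \<noteq> 0 \<longrightarrow> i < n) \<and> (b i \<noteq> 0 \<longrightarrow> i < n)}"

lemma finite_Cols: "finite (Cols n :: ((nat \<Rightarrow> 'k::{zero,finite}) \<times> _) set)"
proof -
  have f: "finite {a :: nat \<Rightarrow> 'k. \<forall>i. (a i \<noteq> 0 \<longrightarrow> i < n) \<and> a i \<in> UNIV}"
    by (rule finite_supp_fun) simp
  have "Cols n \<subseteq> {a :: nat \<Rightarrow> 'k. \<forall>i. (a i \<noteq> 0 \<longrightarrow> i < n) \<and> a i \<in> UNIV} \<times>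
      {a :: nat \<Rightarrow> 'k. \<forall>i. (a i \<noteq> 0 \<longrightarrow> i < n) \<and> a i \<in> UNIV}"
    unfolding Cols_def by auto
  then show ?thesis using f finite_subset by blast
qed

lemma factor:
  fixes f f' :: "('k::{field,finite}) mat"
  assumes f: "f \<in> hom m n" and f': "f' \<in> hom m n"
  shows "\<exists>u \<in> hom (card (Cols n :: ((nat \<Rightarrow> 'k) \<times> _) set)) m. \<exists>g \<in> hom m (card (Cols n :: ((nat \<Rightarrow> 'k) \<times> _) set)).
     mmult (card (Cols n :: ((nat \<Rightarrow> 'k) \<times> _) set)) (mmult m f u) g = f \<and>
     mmult (card (Cols n :: ((nat \<Rightarrow> 'k) \<times> _) set)) (mmult m f' u) g = f'"
proof -
  define K where "K = card (Cols n :: ((nat \<Rightarrow> 'k) \<times> _) set)"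
  obtain h where h: "bij_betw h (Cols n :: ((nat \<Rightarrow> 'k) \<times> _) set) {0..<K}"
    using ex_bij_betw_finite_nat[OF finite_Cols] unfolding K_def by blast
  define col where "col j = ((\<lambda>i. f i j), (\<lambda>i. f' i j))" for j
  have colC: "col j \<in> Cols n" for j using f f' unfolding col_def Cols_def hom_def by auto
  have hK: "h (col j) < K" for j using h colC unfolding bij_betw_def by auto
  define L where "L k = (LEAST l. h (col l) = k)" for k
  define g :: "'k mat" where "g = (\<lambda>k j. if j < m \<and> k = h (col j) then 1 else 0)"
  define u :: "'k mat" where "u = (\<lambda>l k. if l = L k \<and> l < m \<and> h (col l) = k then 1 else 0)"
  have gH: "g \<in> hom m K" unfolding g_def hom_def using hK by auto
  have uH: "u \<in> hom K m" unfolding u_def hom_def using hK by auto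
  have key: "mmult K (mmult m F u) g = F" if F: "F \<in> hom m n"
    and Fc: "\<And>i j j'. col j = col j' \<Longrightarrow> F i j = F i j'" for F :: "'k mat"
  proof (intro ext)
    fix i j
    have fu: "mmult m F u i k = (if L k < m \<and> h (col (L k)) = k then F i (L k) else 0)" for k
    proof -
      have "mmult m F u i k = (\<Sum>l\<in>{..<m}. if l = L k then (if h (col (L k)) = k then F i (L k) else 0) else 0)"
        unfolding mmult_def by (rule sum.cong) (auto simp: u_def)
      also have "\<dots> = (if L k < m \<and> h (col (L k)) = k then F i (L k) else 0)"
        by (simp add: sum.delta)
      finally show ?thesis .
    qed
    have "mmult K (mmult m F u) g i j = (\<Sum>k<K. mmult m F u i k * g k j)" by (simp add: mmult_def)
    also have "\<dots> = (if j < m then mmult m F u i (h (col j)) else 0)"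
      unfolding g_def using hK
      by (simp add: if_distrib[of "\<lambda>x. _ * x"] cong: if_cong)
    also have "\<dots> = F i j"
    proof (cases "j < m")
      case True
      have ex: "h (col j) = h (col j)" by simp
      have Lle: "L (h (col j)) \<le> j" unfolding L_def by (rule Least_le) simp
      have LL: "h (col (L (h (col j)))) = h (col j)" unfolding L_def by (rule LeastI) simp
      then have "col (L (h (col j))) = col j" using h colC unfolding bij_betw_def inj_on_def by blast
      then have "F i (L (h (col j))) = F i j" by (rule Fc)
      moreover have "L (h (col j)) < m" using Lle True by linarith
      ultimately show ?thesis using True LL fu[of "h (col j)"] by simp
    next
      case False
      then show ?thesis using F unfolding hom_def by auto
    qed
    finally show "mmult K (mmult m F u) g i j = F i j" .
  qed
  have "mmult K (mmult m f u) g = f"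
    by (rule key[OF f]) (auto simp: col_def fun_eq_iff)
  moreover have "mmult K (mmult m f' u) g = f'"
    by (rule key[OF f']) (auto simp: col_def fun_eq_iff)
  ultimately show ?thesis using gH uH unfolding K_def by blast
qed

lemma sum_fun_apply: "(\<Sum>I\<in>A. F I) x = (\<Sum>I\<in>A. F I x)"
  by (induction A rule: infinite_finite_induct) auto

definition pairing :: "nat \<Rightarrow> 'z set \<Rightarrow> nat \<Rightarrow> ('z \<times> ('k::field) mat \<Rightarrow> 'k) \<Rightarrow> ('z \<times> 'k mat \<Rightarrow> 'k) \<Rightarrow> 'k" where
  "pairing n Z m v \<phi> = (\<Sum>x\<in>Z \<times> hom m n. v x * \<phi> x)"

definition phi :: "nat \<Rightarrow> ('k::field) mat \<Rightarrow> ('z \<times> 'k mat) set \<Rightarrow> ('z \<times> 'k mat \<Rightarrow> 'k)" where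
  "phi m u C = (\<lambda>x. if (fst x, mmult m (snd x) u) \<in> C then 1 else 0)"

lemma gen_in_equiv:
  assumes "z \<in> Z" "a \<in> hom n n" "f \<in> hom k n"
  shows "((act z a, f), (z, mmult n a f)) \<in> XZ_equiv n Z act k"
proof -
  have "((act z a, f), (z, mmult n a f)) \<in> XZ_gen n Z act k"
    unfolding XZ_gen_def using assms by blast
  then show ?thesis unfolding XZ_equiv_def by blast
qed

lemma equiv_sym:
  assumes "(x, y) \<in> XZ_equiv n Z act k"
  shows "(y, x) \<in> XZ_equiv n Z act k"
proof -
  have "sym (XZ_equiv n Z act k)"
    unfolding XZ_equiv_def by (intro sym_rtrancl sym_Un_converse)
  then show ?thesis using assms by (rule symD)
qed

lemma equiv_trans:
  "(x, y) \<in> XZ_equiv n Z act k \<Longrightarrow> (y, w) \<in> XZ_equiv n Z act k \<Longrightarrow> (x, w) \<in> XZ_equiv n Z act k"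
  unfolding XZ_equiv_def by (rule rtrancl_trans)

lemma gen_map:
  assumes "q \<in> XZ_gen n Z act k" and g: "g \<in> hom m k"
  shows "((fst (fst q), mmult k (snd (fst q)) g), (fst (snd q), mmult k (snd (snd q)) g)) \<in> XZ_gen n Z act m"
proof -
  from assms(1) obtain z a f where q: "q = ((act z a, f), (z, mmult n a f))"
    and zaf: "z \<in> Z" "a \<in> hom n n" "f \<in> hom k n"
    unfolding XZ_gen_def by blast
  have "mmult k (mmult n a f) g = mmult n a (mmult k f g)" by (rule mmult_assoc)
  moreover have "mmult k f g \<in> hom m n" using zaf g by (rule_tac mmult_hom)
  ultimately show ?thesis unfolding XZ_gen_def q using zaf by auto
qed

lemma equiv_pull:
  assumes "(x, y) \<in> XZ_equiv n Z act k" and g: "g \<in> hom m k"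
  shows "((fst x, mmult k (snd x) g), (fst y, mmult k (snd y) g)) \<in> XZ_equiv n Z act m"
  using assms(1) unfolding XZ_equiv_def
proof (induction rule: rtrancl_induct)
  case base
  then show ?case by simp
next
  case (step y w)
  have "((fst y, mmult k (snd y) g), (fst w, mmult k (snd w) g)) \<in> XZ_gen n Z act m \<union> (XZ_gen n Z act m)\<inverse>"
    using step(2)
  proof
    assume "(y, w) \<in> XZ_gen n Z act k"
    from gen_map[OF this g] show ?thesis by simp
  next
    assume "(y, w) \<in> (XZ_gen n Z act k)\<inverse>"
    then have "(w, y) \<in> XZ_gen n Z act k" by simp
    from gen_map[OF this g] show ?thesis by simp
  qed
  with step(3) show ?case by (rule rtrancl_into_rtrancl)
qed

lemma pairing_pull:
  fixes v :: "'z \<times> ('k::{field,finite}) mat \<Rightarrow> 'k"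
  assumes fZ: "finite Z" and g: "g \<in> hom m' m"
  shows "pairing n Z m' (pull n m g v) \<phi> = pairing n Z m v (\<lambda>x. \<phi> (fst x, mmult m (snd x) g))"
proof -
  define G where "G x = (fst x, mmult m (snd x) g)" for x :: "'z \<times> 'k mat"
  have GT: "G ` (Z \<times> hom m n) \<subseteq> Z \<times> hom m' n" using g by (auto simp: G_def intro: mmult_hom)
  have fin1: "finite (Z \<times> (hom m n :: 'k mat set))" by (intro finite_cartesian_product fZ finite_hom)
  have fin2: "finite (Z \<times> (hom m' n :: 'k mat set))" by (intro finite_cartesian_product fZ finite_hom)
  have "pairing n Z m v (\<lambda>x. \<phi> (fst x, mmult m (snd x) g)) = (\<Sum>x\<in>Z \<times> hom m n. v x * \<phi> (G x))"
    unfolding pairing_def G_def ..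
  also have "\<dots> = (\<Sum>y\<in>Z \<times> hom m' n. \<Sum>x\<in>{x \<in> Z \<times> hom m n. G x = y}. v x * \<phi> (G x))"
    by (rule sum.group[OF fin1 fin2 GT, symmetric])
  also have "\<dots> = (\<Sum>y\<in>Z \<times> hom m' n. pull n m g v y * \<phi> y)"
  proof (rule sum.cong[OF refl])
    fix y :: "'z \<times> 'k mat" assume y: "y \<in> Z \<times> hom m' n"
    obtain z h where yzh: "y = (z, h)" by (cases y)
    have zZ: "z \<in> Z" using y yzh by auto
    have setq: "{x \<in> Z \<times> hom m n. G x = y} = Pair z ` {f \<in> hom m n. mmult m f g = h}"
      using zZ by (auto simp: G_def yzh)
    have inj: "inj_on (Pair z) {f \<in> hom m n. mmult m f g = h}" by (auto simp: inj_on_def)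
    have "(\<Sum>x\<in>{x \<in> Z \<times> hom m n. G x = y}. v x * \<phi> (G x)) = (\<Sum>x\<in>{x \<in> Z \<times> hom m n. G x = y}. v x * \<phi> y)"
      by (rule sum.cong) auto
    also have "\<dots> = (\<Sum>x\<in>{x \<in> Z \<times> hom m n. G x = y}. v x) * \<phi> y"
      by (simp add: sum_distrib_right)
    also have "(\<Sum>x\<in>{x \<in> Z \<times> hom m n. G x = y}. v x) = (\<Sum>f\<in>{f \<in> hom m n. mmult m f g = h}. v (z, f))"
      unfolding setq sum.reindex[OF inj] by simp
    also have "\<dots> = pull n m g v y" by (simp add: pull_def yzh)
    finally show "(\<Sum>x\<in>{x \<in> Z \<times> hom m n. G x = y}. v x * \<phi> (G x)) = pull n m g v y * \<phi> y" .
  qed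
  also have "\<dots> = pairing n Z m' (pull n m g v) \<phi>" unfolding pairing_def ..
  finally show ?thesis by simp
qed

lemma pull_FV:
  assumes v: "v \<in> FV n Z m" and g: "g \<in> hom m' m"
  shows "pull n m g v \<in> FV n Z m'"
  unfolding FV_def
proof (intro CollectI allI impI)
  fix x assume ne0: "pull n m g v x \<noteq> 0"
  obtain z h where xzh: "x = (z, h)" by (cases x)
  have ne: "pull n m g v (z, h) \<noteq> 0" using ne0 xzh by simp
  then have "(\<Sum>f\<in>{f \<in> hom m n. mmult m f g = h}. v (z, f)) \<noteq> 0" by (simp add: pull_def)
  then obtain f where f: "f \<in> {f \<in> hom m n. mmult m f g = h}" "v (z, f) \<noteq> 0"
    by (meson sum.not_neutral_contains_not_neutral)
  then have "(z, f) \<in> Z \<times> hom m n" using v unfolding FV_def by blast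
  then show "x \<in> Z \<times> hom m' n" using f g xzh by (auto intro: mmult_hom)
qed

lemma pairing_delta:
  assumes fZ: "finite Z" and x0: "x0 \<in> Z \<times> hom m n"
  shows "pairing n Z m (delta x0 :: 'z \<times> ('k::{field,finite}) mat \<Rightarrow> 'k) \<phi> = \<phi> x0"
proof -
  have fin: "finite (Z \<times> (hom m n :: 'k mat set))" by (intro finite_cartesian_product fZ finite_hom)
  have "pairing n Z m (delta x0) \<phi> = (\<Sum>x\<in>Z \<times> hom m n. if x = x0 then \<phi> x else 0)"
    unfolding pairing_def by (rule sum.cong) (auto simp: delta_def)
  also have "\<dots> = \<phi> x0" using x0 fin by simp
  finally show ?thesis .
qed

lemma pairing_diff: "pairing n Z m (v - w) \<phi> = pairing n Z m v \<phi> - pairing n Z m w \<phi>"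
  unfolding pairing_def by (simp add: sum_subtractf left_diff_distrib)

lemma block_mult:
  "mmult M (mmult M f (block_idem M b I)) u = (\<lambda>i k. \<Sum>j\<in>{j. j < M \<and> b j \<in> I}. f i j * u j k)"
proof (intro ext)
  fix i k
  have e: "mmult M f (block_idem M b I) i j = (if j < M \<and> b j \<in> I then f i j else 0)" for j
  proof -
    have "mmult M f (block_idem M b I) i j = (\<Sum>l\<in>{..<M}. if l = j then (if j < M \<and> b j \<in> I then f i j else 0) else 0)"
      unfolding mmult_def by (rule sum.cong) (auto simp: block_idem_def)
    also have "\<dots> = (if j < M \<and> b j \<in> I then f i j else 0)" by (simp add: sum.delta)
    finally show ?thesis .
  qed
  have "mmult M (mmult M f (block_idem M b I)) u i k = (\<Sum>j\<in>{..<M}. if b j \<in> I then f i j * u j k else 0)"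
    unfolding mmult_def[of M "mmult M f (block_idem M b I)"] by (rule sum.cong) (auto simp: e)
  also have "\<dots> = (\<Sum>j\<in>{j \<in> {..<M}. b j \<in> I}. f i j * u j k)"
    by (rule sum.inter_filter[symmetric]) simp
  also have "{j \<in> {..<M}. b j \<in> I} = {j. j < M \<and> b j \<in> I}" by auto
  finally show "mmult M (mmult M f (block_idem M b I)) u i k = (\<Sum>j\<in>{j. j < M \<and> b j \<in> I}. f i j * u j k)" .
qed

lemma block_sum:
  assumes fI: "finite I"
  shows "mmult M (mmult M f (block_idem M b I)) u = (\<Sum>l\<in>I. mmult M (mmult M f (block_idem M b {l})) u)"
proof (intro ext)
  fix i k
  define S where "S = {j. j < M \<and> b j \<in> I}"
  have fS: "finite S" unfolding S_def by simp
  have "(\<Sum>l\<in>I. mmult M (mmult M f (block_idem M b {l})) u) i k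
      = (\<Sum>l\<in>I. \<Sum>j\<in>{j. j < M \<and> b j \<in> {l}}. f i j * u j k)"
    by (simp add: sum_fun_apply block_mult)
  also have "\<dots> = (\<Sum>l\<in>I. \<Sum>j\<in>{j \<in> S. b j = l}. f i j * u j k)"
    by (rule sum.cong[OF refl], rule sum.cong) (auto simp: S_def)
  also have "\<dots> = (\<Sum>j\<in>S. f i j * u j k)"
    by (rule sum.group) (use fS fI in \<open>auto simp: S_def\<close>)
  also have "\<dots> = mmult M (mmult M f (block_idem M b I)) u i k"
    by (simp add: block_mult S_def)
  finally show "mmult M (mmult M f (block_idem M b I)) u i k = (\<Sum>l\<in>I. mmult M (mmult M f (block_idem M b {l})) u) i k" ..
qed

lemma block_hom: "block_idem M b I \<in> hom M M"
  unfolding hom_def block_idem_def by auto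

definition sat :: "nat \<Rightarrow> 'z set \<Rightarrow> ('z \<Rightarrow> ('k::field) mat \<Rightarrow> 'z) \<Rightarrow> nat \<Rightarrow> ('z \<times> 'k mat) set \<Rightarrow> bool" where
  "sat n Z act D C \<longleftrightarrow> (\<forall>x y. (x, y) \<in> XZ_equiv n Z act D \<longrightarrow> (x \<in> C \<longleftrightarrow> y \<in> C))"

definition KK :: "nat \<Rightarrow> 'z set \<Rightarrow> ('z \<Rightarrow> ('k::field) mat \<Rightarrow> 'z) \<Rightarrow> nat \<Rightarrow> nat \<Rightarrow> ('z \<times> 'k mat \<Rightarrow> 'k) set" where
  "KK n Z act D m = {v \<in> FV n Z m. \<forall>u\<in>hom D m. \<forall>C. sat n Z act D C \<longrightarrow> pairing n Z m v (phi m u C) = 0}"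

lemma KK_sub:
  fixes act :: "'z \<Rightarrow> ('k::{field,finite}) mat \<Rightarrow> 'z"
  assumes fZ: "finite Z" and RE: "right_End_set n Z act"
  shows "GZ_subfunctor n Z act (KK n Z act D)"
  unfolding GZ_subfunctor_def
proof (intro conjI allI ballI)
  fix m
  show "KK n Z act D m \<subseteq> FV n Z m" unfolding KK_def by auto
  show "0 \<in> KK n Z act D m" unfolding KK_def FV_def pairing_def by simp
  fix c
  fix v assume v: "v \<in> KK n Z act D m"
  show "(\<lambda>x. c * v x) \<in> KK n Z act D m"
    using v unfolding KK_def FV_def pairing_def by (auto simp: sum_distrib_left[symmetric] mult.assoc)
next
  fix m v w assume v: "v \<in> KK n Z act D m" and w: "w \<in> KK n Z act D m"
  show "v + w \<in> KK n Z act D m"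
    using v w unfolding KK_def FV_def pairing_def by (auto simp: sum.distrib distrib_right) (metis add.left_neutral add.right_neutral)+
next
  fix m m' :: nat and g :: "'k mat" and v assume g: "g \<in> hom m' m" and v: "v \<in> KK n Z act D m"
  show "pull n m g v \<in> KK n Z act D m'"
    unfolding KK_def
  proof (intro CollectI conjI ballI allI impI)
    show "pull n m g v \<in> FV n Z m'" using v g unfolding KK_def by (auto intro: pull_FV)
    fix u :: "'k mat" and C assume u: "u \<in> hom D m'" and C: "sat n Z act D C"
    have "pairing n Z m' (pull n m g v) (phi m' u C) = pairing n Z m v (\<lambda>x. phi m' u C (fst x, mmult m (snd x) g))"
      by (rule pairing_pull[OF fZ g])
    also have "(\<lambda>x. phi m' u C (fst x, mmult m (snd x) g)) = phi m (mmult m' g u) C"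
      by (simp add: phi_def mmult_assoc)
    also have "pairing n Z m v (phi m (mmult m' g u) C) = 0"
      using v C mmult_hom[OF g u] unfolding KK_def by blast
    finally show "pairing n Z m' (pull n m g v) (phi m' u C) = 0" .
  qed
next
  fix m
  show "GZ_rels n Z act m \<subseteq> KK n Z act D m"
  proof
    fix r assume "r \<in> GZ_rels n Z act m"
    then obtain z a f where r: "r = delta (act z a, f) - delta (z, mmult n a f)"
      and zaf: "z \<in> Z" "a \<in> hom n n" "f \<in> hom m n"
      unfolding GZ_rels_def by blast
    have x1: "(act z a, f) \<in> Z \<times> hom m n" using RE zaf unfolding right_End_set_def by auto
    have x2: "(z, mmult n a f) \<in> Z \<times> hom m n" using zaf by (auto intro: mmult_hom)
    show "r \<in> KK n Z act D m"
      unfolding KK_def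
    proof (intro CollectI conjI ballI allI impI)
      show "r \<in> FV n Z m" unfolding FV_def
      proof (intro CollectI allI impI)
        fix x assume "r x \<noteq> 0"
        then have "x = (act z a, f) \<or> x = (z, mmult n a f)" unfolding r by (auto simp: delta_def split: if_splits)
        then show "x \<in> Z \<times> hom m n" using x1 x2 by blast
      qed
      fix u :: "'k mat" and C assume u: "u \<in> hom D m" and C: "sat n Z act D C"
      have fu: "mmult m f u \<in> hom D n" using zaf u by (auto intro: mmult_hom)
      have eq: "((act z a, mmult m f u), (z, mmult n a (mmult m f u))) \<in> XZ_equiv n Z act D"
        by (rule gen_in_equiv[OF zaf(1) zaf(2) fu])
      have "phi m u C (act z a, f) = phi m u C (z, mmult n a f)"
        using C eq unfolding phi_def sat_def by (simp add: mmult_assoc)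
      then show "pairing n Z m r (phi m u C) = 0"
        unfolding r pairing_diff pairing_delta[OF fZ x1] pairing_delta[OF fZ x2] by simp
    qed
  qed
qed

lemma pairing_sumI:
  "pairing n Z m (\<Sum>I\<in>A. (\<lambda>x. c I * V I x)) \<phi> = (\<Sum>I\<in>A. c I * pairing n Z m (V I) \<phi>)"
proof -
  have "pairing n Z m (\<Sum>I\<in>A. (\<lambda>x. c I * V I x)) \<phi> = (\<Sum>x\<in>Z \<times> hom m n. \<Sum>I\<in>A. c I * V I x * \<phi> x)"
    unfolding pairing_def sum_fun_apply by (simp add: sum_distrib_right)
  also have "\<dots> = (\<Sum>I\<in>A. \<Sum>x\<in>Z \<times> hom m n. c I * V I x * \<phi> x)" by (rule sum.swap)
  also have "\<dots> = (\<Sum>I\<in>A. c I * pairing n Z m (V I) \<phi>)"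
    unfolding pairing_def by (simp add: sum_distrib_left mult.assoc)
  finally show ?thesis .
qed

lemma char_prime: "prime CHAR('k::{field,finite})"
  by (rule prime_CHAR_semidom) (rule finite_imp_CHAR_pos, simp)

lemma inner_vanish:
  fixes f u :: "('k::{field,finite}) mat" and z :: 'z
  assumes f: "f \<in> hom M n" and u: "u \<in> hom D M"
    and t: "t = CHAR('k) * card (hom D n :: 'k mat set)"
  shows "(\<Sum>I\<in>Pow {0..t}. (-1) ^ (t + 1 - card I) * phi M u C (z, mmult M f (block_idem M b I))) = (0::'k)"
proof -
  define p where "p = CHAR('k)"
  define W where "W l = mmult M (mmult M f (block_idem M b {l})) u" for l
  define \<Psi> where "\<Psi> w = (if (z, w) \<in> C then 1 else (0::'k))" for w
  have pp: "prime p" unfolding p_def by (rule char_prime)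
  have pa: "of_nat p = (0 :: 'k mat)" unfolding p_def by (simp add: of_nat_fun fun_eq_iff)
  have pb: "of_nat p = (0 :: 'k)" unfolding p_def by simp
  have WW: "\<forall>i\<in>{0..t}. W i \<in> hom D n"
    unfolding W_def by (intro ballI mmult_hom[OF mmult_hom[OF f block_hom] u])
  have big: "(p - 1) * card (hom D n :: 'k mat set) < card {0..t}"
  proof -
    have "(p - 1) * card (hom D n :: 'k mat set) \<le> p * card (hom D n :: 'k mat set)"
      by (rule mult_le_mono1) simp
    then have "(p - 1) * card (hom D n :: 'k mat set) < p * card (hom D n :: 'k mat set) + 1" by linarith
    then show ?thesis using t unfolding p_def by simp
  qed
  have cv: "(\<Sum>I\<in>Pow {0..t}. (-1) ^ (card {0..t} - card I) * \<Psi> (\<Sum>i\<in>I. W i)) = 0"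
    by (rule cross_vanish[OF pp pa pb _ finite_hom WW big]) simp
  have "(\<Sum>I\<in>Pow {0..t}. (-1) ^ (t + 1 - card I) * phi M u C (z, mmult M f (block_idem M b I)))
      = (\<Sum>I\<in>Pow {0..t}. (-1) ^ (card {0..t} - card I) * \<Psi> (\<Sum>i\<in>I. W i))"
  proof (rule sum.cong[OF refl])
    fix I assume "I \<in> Pow {0..t}"
    then have fI: "finite I" using finite_subset by auto
    have "phi M u C (z, mmult M f (block_idem M b I)) = \<Psi> (mmult M (mmult M f (block_idem M b I)) u)"
      by (simp add: phi_def \<Psi>_def)
    also have "mmult M (mmult M f (block_idem M b I)) u = (\<Sum>i\<in>I. W i)"
      unfolding W_def by (rule block_sum[OF fI])
    finally show "(-1) ^ (t + 1 - card I) * phi M u C (z, mmult M f (block_idem M b I)) =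
      (-1) ^ (card {0..t} - card I) * \<Psi> (\<Sum>i\<in>I. W i)" by simp
  qed
  with cv show ?thesis by simp
qed

lemma KK_deg:
  fixes act :: "'z \<Rightarrow> ('k::{field,finite}) mat \<Rightarrow> 'z"
  assumes fZ: "finite Z"
    and t: "t = CHAR('k) * card (hom D n :: 'k mat set)"
  shows "quotient_deg_le n Z t (KK n Z act D)"
  unfolding quotient_deg_le_def
proof (intro allI impI ballI)
  fix M and b :: "nat \<Rightarrow> nat" and v :: "'z \<times> 'k mat \<Rightarrow> 'k"
  assume v: "v \<in> FV n Z M"
  define c where "c I = ((-1::'k) ^ (t + 1 - card I))" for I :: "nat set"
  define V where "V I = pull n M (block_idem M b I) v" for I
  have Vfv: "V I \<in> FV n Z M" for I unfolding V_def by (rule pull_FV[OF v block_hom])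
  have "(\<Sum>I\<in>Pow {0..t}. (\<lambda>x. c I * V I x)) \<in> KK n Z act D M"
    unfolding KK_def
  proof (intro CollectI conjI ballI allI impI)
    show "(\<Sum>I\<in>Pow {0..t}. (\<lambda>x. c I * V I x)) \<in> FV n Z M"
      unfolding FV_def
    proof (intro CollectI allI impI)
      fix x assume "(\<Sum>I\<in>Pow {0..t}. (\<lambda>x. c I * V I x)) x \<noteq> 0"
      then have "(\<Sum>I\<in>Pow {0..t}. c I * V I x) \<noteq> 0" by (simp add: sum_fun_apply)
      then obtain I where "c I * V I x \<noteq> 0" by (meson sum.not_neutral_contains_not_neutral)
      then have "V I x \<noteq> 0" by auto
      then show "x \<in> Z \<times> hom M n" using Vfv[of I] unfolding FV_def by blast
    qed
    fix u :: "'k mat" and C assume u: "u \<in> hom D M" and C: "sat n Z act D C"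
    have "pairing n Z M (\<Sum>I\<in>Pow {0..t}. (\<lambda>x. c I * V I x)) (phi M u C)
       = (\<Sum>I\<in>Pow {0..t}. c I * pairing n Z M (V I) (phi M u C))"
      by (rule pairing_sumI)
    also have "\<dots> = (\<Sum>I\<in>Pow {0..t}. c I * (\<Sum>x\<in>Z \<times> hom M n. v x * phi M u C (fst x, mmult M (snd x) (block_idem M b I))))"
    proof (rule sum.cong[OF refl])
      fix I assume "I \<in> Pow {0..t}"
      have "pairing n Z M (V I) (phi M u C) = pairing n Z M v (\<lambda>x. phi M u C (fst x, mmult M (snd x) (block_idem M b I)))"
        unfolding V_def by (rule pairing_pull[OF fZ block_hom])
      then show "c I * pairing n Z M (V I) (phi M u C) = c I * (\<Sum>x\<in>Z \<times> hom M n. v x * phi M u C (fst x, mmult M (snd x) (block_idem M b I)))"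
        by (simp add: pairing_def)
    qed
    also have "\<dots> = (\<Sum>x\<in>Z \<times> hom M n. v x * (\<Sum>I\<in>Pow {0..t}. c I * phi M u C (fst x, mmult M (snd x) (block_idem M b I))))"
      by (simp add: sum_distrib_left mult.left_commute sum.swap[of _ "Pow {0..t}"])
    also have "\<dots> = (\<Sum>x\<in>Z \<times> hom M n. v x * 0)"
    proof (rule sum.cong[OF refl])
      fix x :: "'z \<times> 'k mat" assume x: "x \<in> Z \<times> hom M n"
      have "(\<Sum>I\<in>Pow {0..t}. c I * phi M u C (fst x, mmult M (snd x) (block_idem M b I))) = 0"
        unfolding c_def by (rule inner_vanish[OF _ u t]) (use x in auto)
      then show "v x * (\<Sum>I\<in>Pow {0..t}. c I * phi M u C (fst x, mmult M (snd x) (block_idem M b I))) = v x * 0"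
        by simp
    qed
    also have "\<dots> = 0" by simp
    finally show "pairing n Z M (\<Sum>I\<in>Pow {0..t}. (\<lambda>x. c I * V I x)) (phi M u C) = 0" .
  qed
  then show "(\<Sum>I\<in>Pow {0..t}. (\<lambda>x. (-1) ^ (t + 1 - card I) * pull n M (block_idem M b I) v x)) \<in> KK n Z act D M"
    unfolding c_def V_def .
qed

theorem theorem5p8:
  fixes Z :: "'z set" and act :: "'z \<Rightarrow> ('k::{field,finite}) mat \<Rightarrow> 'z" and n :: nat
  assumes "prime CARD('k)"
    and "finite Z"
    and "right_End_set n Z act"
  shows "\<exists>t::nat. \<forall>m. \<forall>x\<in>Z \<times> hom m n. \<forall>y\<in>Z \<times> hom m n.
           (delta x - delta y :: 'z \<times> 'k mat \<Rightarrow> 'k) \<in> qt_ker n Z act t m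
             \<longrightarrow> (x, y) \<in> XZ_equiv n Z act m"
proof -
  define D where "D = card (Cols n :: ((nat \<Rightarrow> 'k) \<times> (nat \<Rightarrow> 'k)) set)"
  define t where "t = CHAR('k) * card (hom D n :: 'k mat set)"
  have sub: "GZ_subfunctor n Z act (KK n Z act D)" by (rule KK_sub[OF assms(2) assms(3)])
  have deg: "quotient_deg_le n Z t (KK n Z act D)" by (rule KK_deg[OF assms(2) t_def])
  show ?thesis
  proof (intro exI[of _ t] allI ballI impI)
    fix m x y assume x: "x \<in> Z \<times> hom m n" and y: "y \<in> Z \<times> hom m n"
      and q: "(delta x - delta y :: 'z \<times> 'k mat \<Rightarrow> 'k) \<in> qt_ker n Z act t m"
    have inK: "(delta x - delta y :: 'z \<times> 'k mat \<Rightarrow> 'k) \<in> KK n Z act D m"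
      using q sub deg unfolding qt_ker_def by blast
    show "(x, y) \<in> XZ_equiv n Z act m"
    proof (rule ccontr)
      assume ne: "(x, y) \<notin> XZ_equiv n Z act m"
      obtain z f where xzf: "x = (z, f)" by (cases x)
      obtain z' f' where yzf: "y = (z', f')" by (cases y)
      have f: "f \<in> hom m n" using x xzf by auto
      have f': "f' \<in> hom m n" using y yzf by auto
      obtain u g where u: "u \<in> hom D m" and g: "g \<in> hom m D"
        and fu: "mmult D (mmult m f u) g = f" and fu': "mmult D (mmult m f' u) g = f'"
        using factor[OF f f'] unfolding D_def by blast
      define C where "C = {w. ((z, mmult m f u), w) \<in> XZ_equiv n Z act D}"
      have satC: "sat n Z act D C" unfolding sat_def C_def using equiv_trans equiv_sym by blast
      have notin: "(z', mmult m f' u) \<notin> C"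
      proof
        assume "(z', mmult m f' u) \<in> C"
        then have "((z, mmult m f u), (z', mmult m f' u)) \<in> XZ_equiv n Z act D" by (simp add: C_def)
        from equiv_pull[OF this g] have "((z, f), (z', f')) \<in> XZ_equiv n Z act m" using fu fu' by simp
        then show False using ne xzf yzf by simp
      qed
      have inC: "(z, mmult m f u) \<in> C" unfolding C_def XZ_equiv_def by simp
      have "pairing n Z m (delta x - delta y) (phi m u C) = 0" using inK u satC unfolding KK_def by blast
      moreover have "pairing n Z m (delta x - delta y) (phi m u C) = (1::'k)"
        unfolding pairing_diff pairing_delta[OF assms(2) x] pairing_delta[OF assms(2) y]
        using inC notin xzf yzf by (simp add: phi_def)
      ultimately show False by simp
    qed
  qed
qed

end
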